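(* Let $H$ be a real Hilbert space with inner product $(\cdot,\cdot)_H$ and norm $\|\cdot\|_H$, and let $f:H\to\mathbb{R}$ be Fréchet differentiable with gradient $\nabla f$ Lipschitz continuous with constant $L$. Then for any $\Phi^{n-1},\Phi^n,\Phi^{n+1}\in H$, $$d_{2t}f(\Phi^{n+1})\le\big(d_{2t}\Phi^{n+1},\,2\nabla f(\Phi^n)-\nabla f(\Phi^{n-1})\big)_H+3L\|d_t\Phi^{n+1}\|_H^2+3L\|d_t\Phi^n\|_H^2,$$ $$d_tf(\Phi^{n+1})\le\big(d_t\Phi^{n+1},\,\tfrac32\nabla f(\Phi^n)-\tfrac12\nabla f(\Phi^{n-1})\big)_H+\tfrac{3L}{4}\|d_t\Phi^{n+1}\|_H^2+\tfrac{L}{4}\|d_t\Phi^n\|_H^2.$$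
   Context: Difference operators: $d_t(\bullet)^{n+1}=(\bullet)^{n+1}-(\bullet)^n$ (so $d_t\Phi^n=\Phi^n-\Phi^{n-1}$), $d_{2t}(\bullet)^{n+1}=3(\bullet)^{n+1}-4(\bullet)^n+(\bullet)^{n-1}$; applied to $f$ these mean e.g. $d_{2t}f(\Phi^{n+1})=3f(\Phi^{n+1})-4f(\Phi^n)+f(\Phi^{n-1})$. *)

theory Defs
  imports "HOL-Analysis.Analysis"
begin

end

theory Submission
  imports Defs
begin

lemma descent:
  fixes f :: "'a::{real_inner, complete_space} \<Rightarrow> real"
    and gradf :: "'a \<Rightarrow> 'a"
  assumes frechet: "\<And>x. (f has_derivative (\<lambda>h. gradf x \<bullet> h)) (at x)"
    and lip: "L-lipschitz_on UNIV gradf"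
  shows "f y - f x \<le> (y - x) \<bullet> gradf x + L / 2 * (norm (y - x))\<^sup>2"
proof -
  define h where "h = y - x"
  have L0: "0 \<le> L" using lip by (simp add: lipschitz_on_def)
  define g where "g t = f (x + t *\<^sub>R h) - t * (gradf x \<bullet> h) - L / 2 * t^2 * (norm h)^2" for t
  define g' where "g' t = gradf (x + t *\<^sub>R h) \<bullet> h - gradf x \<bullet> h - L * t * (norm h)^2" for t
  have D: "DERIV g t :> g' t" for t
  proof -
    have l: "((\<lambda>t. x + t *\<^sub>R h) has_derivative (\<lambda>s. s *\<^sub>R h)) (at t)"
      by (auto intro!: derivative_eq_intros)
    have c: "((\<lambda>t. f (x + t *\<^sub>R h)) has_derivative (\<lambda>s. gradf (x + t *\<^sub>R h) \<bullet> (s *\<^sub>R h))) (at t)"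
      using has_derivative_compose[OF l frechet] by (simp add: o_def)
    have "(\<lambda>s. gradf (x + t *\<^sub>R h) \<bullet> (s *\<^sub>R h)) = (*) (gradf (x + t *\<^sub>R h) \<bullet> h)"
      by (auto simp: mult.commute)
    with c have "DERIV (\<lambda>t. f (x + t *\<^sub>R h)) t :> gradf (x + t *\<^sub>R h) \<bullet> h"
      by (simp add: has_field_derivative_def)
    then show ?thesis unfolding g_def g'_def
      by (auto intro!: derivative_eq_intros simp: power2_eq_square algebra_simps)
  qed
  have neg: "g' t \<le> 0" if "0 \<le> t" for t
  proof -
    have "(gradf (x + t *\<^sub>R h) - gradf x) \<bullet> h \<le> norm (gradf (x + t *\<^sub>R h) - gradf x) * norm h"
      by (rule norm_cauchy_schwarz)
    also have "\<dots> \<le> (L * norm (x + t *\<^sub>R h - x)) * norm h"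
      using lipschitz_onD[OF lip, of "x + t *\<^sub>R h" x] by (simp add: dist_norm mult_right_mono)
    also have "\<dots> = L * t * (norm h)^2" using that by (simp add: power2_eq_square)
    finally show ?thesis unfolding g'_def by (simp add: inner_diff_left)
  qed
  have "g 1 - g 0 \<le> 0"
  proof -
    obtain z where "0 < z" "z < 1" "g 1 - g 0 = (1 - 0) * g' z"
      using MVT2[of 0 1 g g'] D by auto
    then show ?thesis using neg[of z] by simp
  qed
  then show ?thesis unfolding g_def h_def by (simp add: inner_commute)
qed

theorem lemma3p6:
  fixes f :: "'a::{real_inner, complete_space} \<Rightarrow> real"
    and gradf :: "'a \<Rightarrow> 'a"
    and L :: real
    and Phi_prev Phi_n Phi_next :: 'a
  assumes frechet: "\<And>x. (f has_derivative (\<lambda>h. gradf x \<bullet> h)) (at x)"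
    and lip: "L-lipschitz_on UNIV gradf"
  shows "(3 * f Phi_next - 4 * f Phi_n + f Phi_prev
           \<le> (3 *\<^sub>R Phi_next - 4 *\<^sub>R Phi_n + Phi_prev) \<bullet> (2 *\<^sub>R gradf Phi_n - gradf Phi_prev)
             + 3 * L * (norm (Phi_next - Phi_n))\<^sup>2 + 3 * L * (norm (Phi_n - Phi_prev))\<^sup>2)
         \<and> (f Phi_next - f Phi_n
           \<le> (Phi_next - Phi_n) \<bullet> ((3/2) *\<^sub>R gradf Phi_n - (1/2) *\<^sub>R gradf Phi_prev)
             + (3 * L / 4) * (norm (Phi_next - Phi_n))\<^sup>2 + (L / 4) * (norm (Phi_n - Phi_prev))\<^sup>2)"
proof -
  define a where "a = Phi_next - Phi_n"
  define b where "b = Phi_n - Phi_prev"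
  define g1 where "g1 = gradf Phi_n"
  define g0 where "g0 = gradf Phi_prev"
  have L0: "0 \<le> L" using lip by (simp add: lipschitz_on_def)
  have d1: "f Phi_next - f Phi_n \<le> a \<bullet> g1 + L / 2 * (norm a)\<^sup>2"
    using descent[OF frechet lip, of Phi_next Phi_n] by (simp add: a_def g1_def)
  have d2: "f Phi_prev - f Phi_n \<le> (- b) \<bullet> g1 + L / 2 * (norm b)\<^sup>2"
    using descent[OF frechet lip, of Phi_prev Phi_n] by (simp add: b_def g1_def norm_minus_commute)
  have gl: "norm (g1 - g0) \<le> L * norm b"
    using lipschitz_onD[OF lip, of Phi_n Phi_prev] by (simp add: g1_def g0_def b_def dist_norm)
  have ab: "\<bar>a \<bullet> (g1 - g0)\<bar> \<le> L * norm a * norm b"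
  proof -
    have "\<bar>a \<bullet> (g1 - g0)\<bar> \<le> norm a * norm (g1 - g0)" by (rule Cauchy_Schwarz_ineq2)
    also have "\<dots> \<le> norm a * (L * norm b)" by (rule mult_left_mono[OF gl]) simp
    finally show ?thesis by (simp add: algebra_simps)
  qed
  have bb: "\<bar>b \<bullet> (g1 - g0)\<bar> \<le> L * norm b * norm b"
  proof -
    have "\<bar>b \<bullet> (g1 - g0)\<bar> \<le> norm b * norm (g1 - g0)" by (rule Cauchy_Schwarz_ineq2)
    also have "\<dots> \<le> norm b * (L * norm b)" by (rule mult_left_mono[OF gl]) simp
    finally show ?thesis by (simp add: algebra_simps)
  qed
  have amgm: "L * norm a * norm b \<le> L / 2 * ((norm a)\<^sup>2 + (norm b)\<^sup>2)"
  proof -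
    have "2 * (norm a * norm b) \<le> (norm a)\<^sup>2 + (norm b)\<^sup>2"
      using sum_squares_bound[of "norm a" "norm b"] by (simp add: power2_eq_square)
    then have "L * (2 * (norm a * norm b)) \<le> L * ((norm a)\<^sup>2 + (norm b)\<^sup>2)"
      by (rule mult_left_mono) (rule L0)
    then show ?thesis by (simp add: algebra_simps)
  qed
  have e1: "(3 *\<^sub>R Phi_next - 4 *\<^sub>R Phi_n + Phi_prev) = 3 *\<^sub>R a - b"
  proof -
    have "(4::real) *\<^sub>R Phi_n = Phi_n + 3 *\<^sub>R Phi_n"
      using scaleR_add_left[of 1 3 Phi_n] by simp
    then show ?thesis by (simp add: a_def b_def algebra_simps)
  qed
  have e2: "(3 *\<^sub>R a - b) \<bullet> (2 *\<^sub>R g1 - g0) = 3 * (a \<bullet> g1) - b \<bullet> g1 + 3 * (a \<bullet> (g1 - g0)) - b \<bullet> (g1 - g0)"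
    by (simp add: inner_diff_left inner_diff_right inner_add_left algebra_simps)
  have e3: "a \<bullet> ((3/2) *\<^sub>R g1 - (1/2) *\<^sub>R g0) = a \<bullet> g1 + (1/2) * (a \<bullet> (g1 - g0))"
    by (simp add: inner_diff_right algebra_simps)
  define na where "na = (norm a)\<^sup>2"
  define nb where "nb = (norm b)\<^sup>2"
  define p where "p = L * norm a * norm b"
  have bb': "\<bar>b \<bullet> (g1 - g0)\<bar> \<le> L * nb" using bb by (simp add: nb_def power2_eq_square mult.assoc)
  have amgm': "p \<le> L / 2 * (na + nb)" using amgm by (simp add: p_def na_def nb_def)
  have d1': "f Phi_next - f Phi_n \<le> a \<bullet> g1 + L / 2 * na" using d1 by (simp add: na_def)
  have d2': "f Phi_prev - f Phi_n \<le> - (b \<bullet> g1) + L / 2 * nb" using d2 by (simp add: nb_def inner_minus_left)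
  have ab': "\<bar>a \<bullet> (g1 - g0)\<bar> \<le> p" using ab by (simp add: p_def)
  have goal1: "3 * f Phi_next - 4 * f Phi_n + f Phi_prev \<le> 3 * (a \<bullet> g1) - b \<bullet> g1 + 3 * (a \<bullet> (g1 - g0)) - b \<bullet> (g1 - g0) + 3 * L * na + 3 * L * nb"
    using d1' d2' ab' bb' amgm' L0 by (simp add: abs_le_iff algebra_simps) 
  have goal2: "f Phi_next - f Phi_n \<le> a \<bullet> g1 + (1/2) * (a \<bullet> (g1 - g0)) + 3 * L / 4 * na + L / 4 * nb"
    using d1' ab' amgm' L0 by (simp add: abs_le_iff algebra_simps)
  show ?thesis
    unfolding e1 a_def[symmetric] b_def[symmetric] g1_def[symmetric] g0_def[symmetric] e2 e3
    using goal1 goal2 by (simp add: na_def nb_def)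
qed

end
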